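(* Let $\mathcal{H}$ be a complex Hilbert space and let $A\in\mathcal{B}(\mathcal{H})$ be a positive operator with $\dim R(A)\ge 2$. Let $T,S\in\mathcal{B}_A(\mathcal{H})$ and $q\in\mathbb{C}$ with $0<|q|\le 1$. Then \[ |q|^2\,w_{q,A}(TS)\le 4\,w_{q,A}(T)\,w_{q,A}(S). \]
   Context: $A$ induces the semi-inner product $\langle x,y\rangle_A=\langle Ax,y\rangle$ and seminorm $\|x\|_A=\sqrt{\langle x,x\rangle_A}$. $\mathcal{B}_A(\mathcal{H})$ is the set of operators $T$ admitting an $A$-adjoint, i.e. an operator $W$ with $\langle Tx,y\rangle_A=\langle x,Wy\rangle_A$ for all $x,y$. The $A$-$q$-numerical radius is $w_{q,A}(T)=\sup\{|\langle Tx,y\rangle_A| : \|x\|_A=\|y\|_A=1,\ \langle x,y\rangle_A=q\}$. *)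

theory Defs
  imports "HOL-Analysis.Analysis"
begin

class complex_inner = real_normed_vector +
  fixes scaleC :: "complex \<Rightarrow> 'a \<Rightarrow> 'a"
    and cinner :: "'a \<Rightarrow> 'a \<Rightarrow> complex"
  assumes scaleC_add_right: "scaleC a (x + y) = scaleC a x + scaleC a y"
    and scaleC_add_left: "scaleC (a + b) x = scaleC a x + scaleC b x"
    and scaleC_scaleC: "scaleC a (scaleC b x) = scaleC (a * b) x"
    and scaleC_one: "scaleC 1 x = x"
    and scaleR_scaleC: "scaleR r x = scaleC (complex_of_real r) x"
    and cinner_add_left: "cinner (x + y) z = cinner x z + cinner y z"
    and cinner_scaleC_left: "cinner (scaleC c x) y = c * cinner x y"
    and cinner_commute: "cinner y x = cnj (cinner x y)"
    and cinner_self_nonneg: "0 \<le> Re (cinner x x)"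
    and cinner_self_eq_zero: "cinner x x = 0 \<longleftrightarrow> x = 0"
    and norm_eq_sqrt_cinner: "norm x = sqrt (Re (cinner x x))"

class chilbert_space = complex_inner + complete_space

definition clinear_op :: "('a::complex_inner \<Rightarrow> 'a) \<Rightarrow> bool" where
  "clinear_op T \<longleftrightarrow> (\<forall>x y. T (x + y) = T x + T y) \<and> (\<forall>c x. T (scaleC c x) = scaleC c (T x))"

definition bounded_op :: "('a::complex_inner \<Rightarrow> 'a) \<Rightarrow> bool" where
  "bounded_op T \<longleftrightarrow> clinear_op T \<and> (\<exists>K. \<forall>x. norm (T x) \<le> norm x * K)"

definition positive_op :: "('a::complex_inner \<Rightarrow> 'a) \<Rightarrow> bool" where
  "positive_op A \<longleftrightarrow> bounded_op A \<and> (\<forall>x. Im (cinner (A x) x) = 0 \<and> 0 \<le> Re (cinner (A x) x))"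

text \<open>dim R(A) \<ge> 2: the range contains two linearly independent vectors.\<close>
definition range_dim_ge_2 :: "('a::complex_inner \<Rightarrow> 'a) \<Rightarrow> bool" where
  "range_dim_ge_2 A \<longleftrightarrow> (\<exists>u\<in>range A. \<exists>v\<in>range A.
      \<forall>a b. scaleC a u + scaleC b v = 0 \<longrightarrow> a = 0 \<and> b = 0)"

definition A_inner :: "('a::complex_inner \<Rightarrow> 'a) \<Rightarrow> 'a \<Rightarrow> 'a \<Rightarrow> complex" where
  "A_inner A x y = cinner (A x) y"

definition A_norm :: "('a::complex_inner \<Rightarrow> 'a) \<Rightarrow> 'a \<Rightarrow> real" where
  "A_norm A x = sqrt (Re (A_inner A x x))"

definition has_A_adjoint :: "('a::complex_inner \<Rightarrow> 'a) \<Rightarrow> ('a \<Rightarrow> 'a) \<Rightarrow> bool" where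
  "has_A_adjoint A T \<longleftrightarrow> bounded_op T \<and>
     (\<exists>W. bounded_op W \<and> (\<forall>x y. A_inner A (T x) y = A_inner A x (W y)))"

definition A_q_numrad :: "('a::complex_inner \<Rightarrow> 'a) \<Rightarrow> complex \<Rightarrow> ('a \<Rightarrow> 'a) \<Rightarrow> real" where
  "A_q_numrad A q T = Sup {cmod (A_inner A (T x) y) | x y.
      A_norm A x = 1 \<and> A_norm A y = 1 \<and> A_inner A x y = q}"

end

theory Submission
  imports Defs
begin

lemma cinner_add_right: "cinner x (y + z) = cinner x y + cinner x z"
  by (metis cinner_add_left cinner_commute complex_cnj_add)
lemma cinner_scaleC_right: "cinner x (scaleC c y) = cnj c * cinner x y"
  by (metis cinner_scaleC_left cinner_commute complex_cnj_mult)
lemma scaleC_zero_right: "scaleC c (0::'a::complex_inner) = 0"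
  using scaleC_add_right[of c "0::'a" 0] by simp
lemma scaleC_zero_left: "scaleC 0 (x::'a::complex_inner) = 0"
  using scaleC_add_left[of 0 0 x] by simp
lemma scaleC_minus1: "scaleC (-1) (x::'a::complex_inner) = - x"
  using scaleR_scaleC[of "-1" x] by simp

lemma cs_real:
  fixes a b pp :: real
  assumes h: "\<And>t. t \<ge> 0 \<Longrightarrow> 0 \<le> a - 2 * t * pp + t^2 * pp * b" and "pp \<ge> 0" "b \<ge> 0"
  shows "pp \<le> a*b"
proof (cases "b > 0")
  case True
  have "0 \<le> a - 2*(1/b)*pp + (1/b)^2*pp*b" using h[of "1/b"] True by simp
  also have "\<dots> = a - pp/b" using True by (simp add: field_simps power2_eq_square)
  finally show ?thesis using True by (simp add: field_simps)
next
  case False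
  hence b0: "b = 0" using assms by simp
  have a0: "0 \<le> a" using h[of 0] by simp
  show ?thesis
  proof (rule ccontr)
    assume "\<not> pp \<le> a*b"
    hence pq: "pp > 0" using b0 by simp
    have "0 \<le> a - 2*((a+1)/(2*pp))*pp" using h[of "(a+1)/(2*pp)"] b0 pq a0 by simp
    also have "\<dots> = -1" using pq by (simp add: field_simps)
    finally show False by simp
  qed
qed

lemma form_cs:
  fixes B :: "'a::complex_inner \<Rightarrow> 'a \<Rightarrow> complex"
  assumes add: "\<And>x y z. B (x + y) z = B x z + B y z"
    and sc: "\<And>c x y. B (scaleC c x) y = c * B x y"
    and herm: "\<And>x y. B y x = cnj (B x y)"
    and pos: "\<And>x. 0 \<le> Re (B x x)"
  shows "(cmod (B x y))^2 \<le> Re (B x x) * Re (B y y)"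
proof -
  have addr: "B x (y + z) = B x y + B x z" for x y z
    by (metis add herm complex_cnj_add)
  have scr: "B x (scaleC c y) = cnj c * B x y" for x y c
    by (metis sc herm complex_cnj_mult)
  have re: "B x x = complex_of_real (Re (B x x))" for x
    proof -
    have "Im (B x x) = 0" using arg_cong[OF herm[of x x], of Im] by simp
    thus ?thesis by (simp add: complex_eq_iff)
  qed
  define p where "p = B x y"
  have expand: "B (x + scaleC c y) (x + scaleC c y) = B x x + cnj c * p + c * cnj p + c * cnj c * B y y" for c
    unfolding p_def using add sc addr scr herm[of x y] by (simp add: algebra_simps)
  show ?thesis
  proof (rule cs_real)
    fix r :: real assume "r \<ge> 0"
    have "0 \<le> Re (B (x + scaleC (- of_real r * p) y) (x + scaleC (- of_real r * p) y))" by (rule pos)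
    also have "\<dots> = Re (B x x) - 2 * r * (cmod p)^2 + r^2 * (cmod p)^2 * Re (B y y)"
    proof -
      have pc: "p * cnj p = of_real ((cmod p)^2)" using complex_norm_square[of p] by simp
      have "B (x + scaleC (- of_real r * p) y) (x + scaleC (- of_real r * p) y)
          = B x x - 2 * of_real r * (p * cnj p) + (of_real r)^2 * (p * cnj p) * B y y"
        unfolding expand by (simp add: algebra_simps power2_eq_square)
      also have "\<dots> = of_real (Re (B x x) - 2 * r * (cmod p)^2 + r^2 * (cmod p)^2 * Re (B y y))"
        by (subst re[of x], subst re[of y], simp only: pc, simp)
      finally show ?thesis by simp
    qed
    finally show "0 \<le> Re (B x x) - 2 * r * (cmod (B x y))^2 + r^2 * (cmod (B x y))^2 * Re (B y y)"
      by (simp add: p_def)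
  qed (auto simp: pos)
qed

lemma lin_add: "bounded_op T \<Longrightarrow> T (x + y) = T x + T y"
  unfolding bounded_op_def clinear_op_def by blast
lemma lin_sc: "bounded_op T \<Longrightarrow> T (scaleC c x) = scaleC c (T x)"
  unfolding bounded_op_def clinear_op_def by blast
lemma lin_zero: "bounded_op T \<Longrightarrow> T 0 = 0"
  using lin_sc[of T 0 0] by (simp add: scaleC_zero_left)
lemma lin_minus: "bounded_op T \<Longrightarrow> T (- x) = - T x"
  using lin_sc[of T "-1" x] by (simp add: scaleC_minus1)
lemma lin_diff: "bounded_op T \<Longrightarrow> T (x - y) = T x - T y"
  using lin_add[of T x "-y"] lin_minus[of T y] by simp

lemma pos_selfadj:
  assumes "positive_op A"
  shows "cinner (A x) y = cinner x (A y)"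
proof -
  have bA: "bounded_op A" using assms positive_op_def by blast
  have im: "Im (cinner (A z) z) = 0" for z using assms positive_op_def by blast
  define a where "a = cinner (A x) y"
  define b where "b = cinner (A y) x"
  have e1: "cinner (A (x + z)) (x + z) = cinner (A x) x + cinner (A x) z + cinner (A z) x + cinner (A z) z" for z
    using lin_add[OF bA] by (simp add: cinner_add_left cinner_add_right)
  have "Im (a + b) = 0" using im[of "x+y"] e1[of y] im[of x] im[of y] by (simp add: a_def b_def)
  moreover have "Im (- \<i> * a + \<i> * b) = 0"
    using im[of "x + scaleC \<i> y"] e1[of "scaleC \<i> y"] im[of x] im[of "scaleC \<i> y"]
    by (simp add: a_def b_def lin_sc[OF bA] cinner_scaleC_left cinner_scaleC_right)
  ultimately have "a = cnj b" by (simp add: complex_eq_iff)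
  thus ?thesis by (simp add: a_def b_def cinner_commute[of x "A y"])
qed

lemma A_self_re: "positive_op A \<Longrightarrow> 0 \<le> Re (A_inner A x x)"
  unfolding positive_op_def A_inner_def by blast
lemma A_self_im: "positive_op A \<Longrightarrow> Im (A_inner A x x) = 0"
  unfolding positive_op_def A_inner_def by blast
lemma A_norm_nonneg: "positive_op A \<Longrightarrow> 0 \<le> A_norm A x"
  unfolding A_norm_def using A_self_re by simp
lemma A_norm_sq: "positive_op A \<Longrightarrow> (A_norm A x)^2 = Re (A_inner A x x)"
  unfolding A_norm_def using A_self_re by simp
lemma A_inner_self: "positive_op A \<Longrightarrow> A_inner A x x = of_real ((A_norm A x)^2)"
  using A_norm_sq[of A x] A_self_im[of A x] by (simp add: complex_eq_iff)

lemma A_cs: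
  assumes "positive_op A"
  shows "cmod (A_inner A x y) \<le> A_norm A x * A_norm A y"
proof -
  have bA: "bounded_op A" using assms positive_op_def by blast
  have "(cmod (A_inner A x y))^2 \<le> Re (A_inner A x x) * Re (A_inner A y y)"
  proof (rule form_cs[where B="A_inner A"])
    show "A_inner A (x + y) z = A_inner A x z + A_inner A y z" for x y z
      by (simp add: A_inner_def lin_add[OF bA] cinner_add_left)
    show "A_inner A (scaleC c x) y = c * A_inner A x y" for c x y
      by (simp add: A_inner_def lin_sc[OF bA] cinner_scaleC_left)
    show "A_inner A y x = cnj (A_inner A x y)" for x y
      by (simp add: A_inner_def pos_selfadj[OF assms] cinner_commute[of "x" "A y"])
    show "0 \<le> Re (A_inner A x x)" for x using assms positive_op_def A_inner_def by metis
  qed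
  also have "\<dots> = (A_norm A x * A_norm A y)^2"
    using assms unfolding A_norm_def positive_op_def A_inner_def
    by (simp add: power_mult_distrib)
  finally show ?thesis
    by (rule power2_le_imp_le) (simp add: A_norm_nonneg assms)
qed

lemma cinner_cs: "cmod (cinner x y) \<le> norm x * norm y"
proof -
  have "(cmod (cinner x y))^2 \<le> Re (cinner x x) * Re (cinner y y)"
    by (rule form_cs, rule cinner_add_left, rule cinner_scaleC_left, rule cinner_commute, rule cinner_self_nonneg)
  also have "\<dots> = (norm x * norm y)^2"
    by (simp add: norm_eq_sqrt_cinner power_mult_distrib cinner_self_nonneg)
  finally show ?thesis by (rule power2_le_imp_le) simp
qed

lemma A_null: assumes "positive_op A" "A_norm A x = 0" shows "A x = 0"
proof -
  have "cmod (A_inner A x (A x)) \<le> 0" using A_cs[OF assms(1), of x "A x"] assms(2) by simp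
  hence "cinner (A x) (A x) = 0" by (simp add: A_inner_def)
  thus ?thesis using cinner_self_eq_zero by blast
qed

lemma logconv:
  fixes b :: "nat \<Rightarrow> real"
  assumes nn: "\<And>k. b k \<ge> 0" and lc: "\<And>k. (b (Suc k))^2 \<le> b k * b (Suc (Suc k))"
    and gr: "\<And>n. b n \<le> C * M^n" and M: "M > 0"
  shows "b 1 \<le> M * b 0"
proof -
  have c1: "b k * b 1 \<le> b (Suc k) * b 0" for k
  proof (induction k)
    case 0 then show ?case by simp
  next
    case (Suc k)
    show ?case
    proof (cases "b k = 0")
      case True
      hence "(b (Suc k))^2 \<le> 0" using lc[of k] by simp
      hence "b (Suc k) = 0" by simp
      thus ?thesis using nn[of "Suc (Suc k)"] nn[of 0] by simp
    next
      case False
      hence bk: "b k > 0" using nn[of k] by simp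
      have "b k * (b (Suc k) * b 1) \<le> b (Suc k) * (b (Suc k) * b 0)"
        using mult_left_mono[OF Suc.IH nn[of "Suc k"]] by (simp add: algebra_simps)
      also have "\<dots> = (b (Suc k))^2 * b 0" by (simp add: power2_eq_square)
      also have "\<dots> \<le> b k * b (Suc (Suc k)) * b 0" using mult_right_mono[OF lc[of k] nn[of 0]] .
      finally have "b k * (b (Suc k) * b 1) \<le> b k * (b (Suc (Suc k)) * b 0)" by (simp add: algebra_simps)
      thus ?thesis using bk by simp
    qed
  qed
  have c2: "(b 1)^n * b 0 \<le> (b 0)^n * b n" for n
  proof (induction n)
    case 0 then show ?case by simp
  next
    case (Suc n)
    have "(b 1)^(Suc n) * b 0 = b 1 * ((b 1)^n * b 0)" by simp
    also have "\<dots> \<le> b 1 * ((b 0)^n * b n)" using mult_left_mono[OF Suc.IH nn[of 1]] .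
    also have "\<dots> = (b 0)^n * (b n * b 1)" by (simp add: algebra_simps)
    also have "\<dots> \<le> (b 0)^n * (b (Suc n) * b 0)" using mult_left_mono[OF c1[of n]] nn[of 0] by simp
    also have "\<dots> = (b 0)^(Suc n) * b (Suc n)" by (simp add: algebra_simps)
    finally show ?case .
  qed
  show ?thesis
  proof (cases "b 0 = 0")
    case True
    hence "(b 1)^2 \<le> 0" using lc[of 0] by simp
    hence "b 1 = 0" by simp
    thus ?thesis using True by simp
  next
    case False
    hence b0: "b 0 > 0" using nn[of 0] by simp
    show ?thesis
    proof (rule ccontr)
      assume "\<not> ?thesis"
      hence gt: "b 1 > M * b 0" by simp
      define r where "r = b 1 / (M * b 0)"
      have r1: "r > 1" using gt b0 M by (simp add: r_def)
      obtain n where n: "C / b 0 < r^n" using real_arch_pow[OF r1] by blast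
      have "b 1 = r * (M * b 0)" using b0 M by (simp add: r_def)
      hence "(b 1)^n = r^n * M^n * (b 0)^n" by (simp add: power_mult_distrib)
      hence "r^n * M^n * (b 0)^n * b 0 = (b 1)^n * b 0" by simp
      also have "\<dots> \<le> (b 0)^n * b n" by (rule c2)
      also have "\<dots> \<le> (b 0)^n * (C * M^n)" using mult_left_mono[OF gr[of n], of "(b 0)^n"] b0 by simp
      finally have "r^n * M^n * (b 0)^n * b 0 \<le> (b 0)^n * (C * M^n)" .
      hence "(M^n * (b 0)^n) * (r^n * b 0) \<le> (M^n * (b 0)^n) * C" by (simp add: algebra_simps)
      hence "r^n * b 0 \<le> C" using M b0 by simp
      thus False using n b0 by (simp add: field_simps)
    qed
  qed
qed

lemma adj_swap:
  assumes "positive_op A" "\<And>x y. A_inner A (T x) y = A_inner A x (W y)"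
  shows "A_inner A (W x) y = A_inner A x (T y)"
proof -
  have "A_inner A (W x) y = cinner (W x) (A y)" by (simp add: A_inner_def pos_selfadj[OF assms(1)])
  also have "\<dots> = cnj (A_inner A y (W x))" by (simp add: A_inner_def cinner_commute[of "W x"])
  also have "\<dots> = cnj (A_inner A (T y) x)" by (simp add: assms(2))
  also have "\<dots> = cnj (cinner (T y) (A x))" by (simp add: A_inner_def pos_selfadj[OF assms(1)])
  also have "\<dots> = A_inner A x (T y)" by (simp add: A_inner_def cinner_commute[of "T y"])
  finally show ?thesis .
qed

lemma A_norm_le_norm:
  assumes "positive_op A" shows "\<exists>K\<ge>0. \<forall>z. A_norm A z \<le> K * norm z"
proof -
  obtain KA where KA: "\<And>x. norm (A x) \<le> norm x * KA"
    using assms unfolding positive_op_def bounded_op_def by blast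
  have "A_norm A z \<le> sqrt \<bar>KA\<bar> * norm z" for z
  proof -
    have "(A_norm A z)^2 = Re (cinner (A z) z)" using A_norm_sq[OF assms] by (simp add: A_inner_def)
    also have "\<dots> \<le> cmod (cinner (A z) z)" by (rule complex_Re_le_cmod)
    also have "\<dots> \<le> norm (A z) * norm z" by (rule cinner_cs)
    also have "\<dots> \<le> norm z * \<bar>KA\<bar> * norm z"
      by (rule mult_right_mono, rule order_trans[OF KA[of z]], rule mult_left_mono, auto)
    also have "\<dots> = (sqrt \<bar>KA\<bar> * norm z)^2" by (simp add: power2_eq_square)
    finally show ?thesis by (rule power2_le_imp_le) simp
  qed
  thus ?thesis by (intro exI[of _ "sqrt \<bar>KA\<bar>"]) auto
qed

lemma A_bdd:
  assumes pA: "positive_op A" and hT: "has_A_adjoint A T"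
  shows "\<exists>C\<ge>0. \<forall>x. A_norm A (T x) \<le> C * A_norm A x"
proof -
  obtain W where bT: "bounded_op T" and bW: "bounded_op W" and adj: "\<And>x y. A_inner A (T x) y = A_inner A x (W y)"
    using hT unfolding has_A_adjoint_def by blast
  obtain KT where KT: "\<And>x. norm (T x) \<le> norm x * KT" using bT unfolding bounded_op_def by blast
  obtain KW where KW: "\<And>x. norm (W x) \<le> norm x * KW" using bW unfolding bounded_op_def by blast
  obtain K where K0: "K \<ge> 0" and K: "\<And>z. A_norm A z \<le> K * norm z" using A_norm_le_norm[OF pA] by blast
  define U where "U = W \<circ> T"
  define M where "M = max 1 (\<bar>KT\<bar> * \<bar>KW\<bar>)"
  have M0: "M > 0" by (simp add: M_def)
  have UM: "norm (U x) \<le> M * norm x" for x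
  proof -
    have "norm (U x) \<le> norm (T x) * \<bar>KW\<bar>" unfolding U_def
      using KW[of "T x"] by (simp add: order_trans mult_left_mono)
    also have "\<dots> \<le> norm x * \<bar>KT\<bar> * \<bar>KW\<bar>"
      by (rule mult_right_mono, rule order_trans[OF KT[of x]], rule mult_left_mono, auto)
    also have "\<dots> = norm x * (\<bar>KT\<bar> * \<bar>KW\<bar>)" by (simp add: algebra_simps)
    also have "\<dots> \<le> norm x * M" by (rule mult_left_mono) (auto simp: M_def)
    finally show ?thesis by (simp add: mult.commute)
  qed
  have key: "(A_norm A (U y))^2 \<le> A_norm A y * A_norm A (U (U y))" for y
  proof -
    have "A_inner A (U y) (U y) = A_inner A (T y) (T (U y))"
      unfolding U_def by (simp add: adj_swap[OF pA adj])
    also have "\<dots> = A_inner A y (U (U y))" by (simp add: adj U_def)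
    finally have e: "A_inner A (U y) (U y) = A_inner A y (U (U y))" .
    have "(A_norm A (U y))^2 = Re (A_inner A y (U (U y)))" using A_norm_sq[OF pA] e by simp
    also have "\<dots> \<le> cmod (A_inner A y (U (U y)))" by (rule complex_Re_le_cmod)
    also have "\<dots> \<le> A_norm A y * A_norm A (U (U y))" by (rule A_cs[OF pA])
    finally show ?thesis .
  qed
  have Ubd: "A_norm A (U z) \<le> M * A_norm A z" for z
  proof -
    let ?b = "\<lambda>k. A_norm A ((U ^^ k) z)"
    have "?b 1 \<le> M * ?b 0"
    proof (rule logconv[where C = "K * norm z"])
      show "0 \<le> ?b k" for k by (rule A_norm_nonneg[OF pA])
      show "(?b (Suc k))^2 \<le> ?b k * ?b (Suc (Suc k))" for k using key[of "(U ^^ k) z"] by simp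
      have pw: "norm ((U ^^ n) z) \<le> M^n * norm z" for n
      proof (induction n)
        case 0 then show ?case by simp
      next
        case (Suc n)
        have "norm ((U ^^ Suc n) z) \<le> M * norm ((U ^^ n) z)" using UM by simp
        also have "\<dots> \<le> M * (M^n * norm z)" using Suc.IH M0 by simp
        finally show ?case by simp
      qed
      show "?b n \<le> K * norm z * M^n" for n
        using order_trans[OF K mult_left_mono[OF pw K0]] by (simp add: algebra_simps)
    qed (rule M0)
    thus ?thesis by simp
  qed
  have "A_norm A (T x) \<le> sqrt M * A_norm A x" for x
  proof -
    have "(A_norm A (T x))^2 = Re (A_inner A x (U x))" using A_norm_sq[OF pA] adj by (simp add: U_def)
    also have "\<dots> \<le> cmod (A_inner A x (U x))" by (rule complex_Re_le_cmod)
    also have "\<dots> \<le> A_norm A x * A_norm A (U x)" by (rule A_cs[OF pA])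
    also have "\<dots> \<le> A_norm A x * (M * A_norm A x)" by (rule mult_left_mono[OF Ubd A_norm_nonneg[OF pA]])
    also have "\<dots> = (sqrt M * A_norm A x)^2" using M0 by (simp add: power2_eq_square)
    finally show ?thesis by (rule power2_le_imp_le) (use M0 A_norm_nonneg[OF pA, of x] in simp)
  qed
  thus ?thesis by (intro exI[of _ "sqrt M"]) (auto simp: M0 less_imp_le)
qed

lemma bA: "positive_op A \<Longrightarrow> bounded_op A" unfolding positive_op_def by blast

lemma Ai_add_left: "positive_op A \<Longrightarrow> A_inner A (x + y) z = A_inner A x z + A_inner A y z"
  by (simp add: A_inner_def lin_add[OF bA] cinner_add_left)
lemma Ai_add_right: "A_inner A x (y + z) = A_inner A x y + A_inner A x z"
  by (simp add: A_inner_def cinner_add_right)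
lemma Ai_sc_left: "positive_op A \<Longrightarrow> A_inner A (scaleC c x) y = c * A_inner A x y"
  by (simp add: A_inner_def lin_sc[OF bA] cinner_scaleC_left)
lemma Ai_sc_right: "A_inner A x (scaleC c y) = cnj c * A_inner A x y"
  by (simp add: A_inner_def cinner_scaleC_right)
lemma Ai_commute: "positive_op A \<Longrightarrow> A_inner A y x = cnj (A_inner A x y)"
  by (simp add: A_inner_def pos_selfadj cinner_commute[of "x" "A y"])
lemma Ai_diff_left: "positive_op A \<Longrightarrow> A_inner A (x - y) z = A_inner A x z - A_inner A y z"
  using Ai_add_left[of A x "-y" z] Ai_sc_left[of A "-1" y z] by (simp add: scaleC_minus1)

lemma A_norm_sc: assumes "positive_op A" shows "A_norm A (scaleC c x) = cmod c * A_norm A x"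
proof -
  have "(A_norm A (scaleC c x))^2 = Re (c * cnj c * A_inner A x x)"
    using A_norm_sq[OF assms] A_self_im[OF assms, of x] by (simp add: Ai_sc_left[OF assms] Ai_sc_right mult.assoc)
  also have "\<dots> = (cmod c)^2 * (A_norm A x)^2"
  proof -
    have "c * cnj c * A_inner A x x = of_real ((cmod c)^2) * of_real ((A_norm A x)^2)"
      by (subst complex_norm_square[symmetric]) (simp add: A_inner_self[OF assms])
    thus ?thesis by (simp del: of_real_power)
  qed
  also have "\<dots> = (cmod c * A_norm A x)^2" by (simp add: power_mult_distrib)
  finally show ?thesis using A_norm_nonneg[OF assms]
    by (metis norm_ge_zero mult_nonneg_nonneg power2_eq_iff_nonneg)
qed

lemma unit_scale:
  assumes "positive_op A" "A_norm A w \<noteq> 0"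
  shows "A_norm A (scaleC (of_real (1 / A_norm A w)) w) = 1"
  using A_norm_sc[OF assms(1)] assms A_norm_nonneg[OF assms(1), of w] by (simp add: norm_divide)

lemma exists_unit:
  assumes pA: "positive_op A" and r2: "range_dim_ge_2 A"
  shows "\<exists>u. A_norm A u = 1"
proof -
  obtain a1 b1 where ind: "\<And>a b. scaleC a (A a1) + scaleC b (A b1) = 0 \<Longrightarrow> a = 0 \<and> b = 0"
    using r2 unfolding range_dim_ge_2_def by blast
  have "A a1 \<noteq> 0"
  proof
    assume "A a1 = 0"
    hence "scaleC 1 (A a1) + scaleC 0 (A b1) = 0" by (simp add: scaleC_zero_left scaleC_zero_right)
    thus False using ind[of 1 0] by simp
  qed
  hence "A_norm A a1 \<noteq> 0" using A_null[OF pA] by blast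
  thus ?thesis using unit_scale[OF pA] by blast
qed

lemma exists_orth:
  assumes pA: "positive_op A" and r2: "range_dim_ge_2 A" and u: "A_norm A u = 1"
  shows "\<exists>z. A_norm A z = 1 \<and> A_inner A u z = 0 \<and> A_inner A z u = 0"
proof -
  obtain a1 b1 where ind: "\<And>a b. scaleC a (A a1) + scaleC b (A b1) = 0 \<Longrightarrow> a = 0 \<and> b = 0"
    using r2 unfolding range_dim_ge_2_def by blast
  have uu: "A_inner A u u = 1" using A_inner_self[OF pA, of u] u by simp
  define wa where "wa = a1 - scaleC (A_inner A a1 u) u"
  define wb where "wb = b1 - scaleC (A_inner A b1 u) u"
  have oa: "A_inner A wa u = 0" unfolding wa_def by (simp add: Ai_diff_left[OF pA] Ai_sc_left[OF pA] uu)
  have ob: "A_inner A wb u = 0" unfolding wb_def by (simp add: Ai_diff_left[OF pA] Ai_sc_left[OF pA] uu)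
  have "\<exists>w. A_norm A w \<noteq> 0 \<and> A_inner A w u = 0"
  proof (rule ccontr)
    assume "\<not> ?thesis"
    hence "A_norm A wa = 0" "A_norm A wb = 0" using oa ob by auto
    hence "A wa = 0" "A wb = 0" using A_null[OF pA] by auto
    hence ea: "A a1 = scaleC (A_inner A a1 u) (A u)" and eb: "A b1 = scaleC (A_inner A b1 u) (A u)"
      unfolding wa_def wb_def by (simp_all add: lin_diff[OF bA[OF pA]] lin_sc[OF bA[OF pA]])
    define ca where "ca = A_inner A a1 u"
    define cb where "cb = A_inner A b1 u"
    have "scaleC cb (A a1) + scaleC (- ca) (A b1) = scaleC (cb * ca) (A u) + scaleC ((- ca) * cb) (A u)"
      using ea eb by (simp add: ca_def cb_def scaleC_scaleC)
    also have "\<dots> = scaleC (cb * ca + (- ca) * cb) (A u)" by (rule scaleC_add_left[symmetric])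
    also have "\<dots> = 0" by (simp add: scaleC_zero_left)
    finally have "cb = 0 \<and> - ca = 0" using ind by blast
    hence "A a1 = 0" using ea by (simp add: ca_def scaleC_zero_left)
    hence "scaleC 1 (A a1) + scaleC 0 (A b1) = 0" by (simp add: scaleC_zero_left scaleC_zero_right)
    thus False using ind[of 1 0] by simp
  qed
  then obtain w where w: "A_norm A w \<noteq> 0" "A_inner A w u = 0" by blast
  define z where "z = scaleC (of_real (1 / A_norm A w)) w"
  have "A_norm A z = 1" unfolding z_def by (rule unit_scale[OF pA w(1)])
  moreover have "A_inner A z u = 0" unfolding z_def by (simp add: Ai_sc_left[OF pA] w(2))
  moreover hence "A_inner A u z = 0" using Ai_commute[OF pA, of u z] by simp
  ultimately show ?thesis by blast
qed

definition qset :: "('a::complex_inner \<Rightarrow> 'a) \<Rightarrow> complex \<Rightarrow> ('a \<Rightarrow> 'a) \<Rightarrow> real set" where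
  "qset A q T = {cmod (A_inner A (T x) y) | x y. A_norm A x = 1 \<and> A_norm A y = 1 \<and> A_inner A x y = q}"

lemma numrad_eq: "A_q_numrad A q T = Sup (qset A q T)"
  unfolding A_q_numrad_def qset_def by simp

lemma qvec:
  assumes pA: "positive_op A" and u: "A_norm A u = 1" and z: "A_norm A z = 1"
    and uz: "A_inner A u z = 0" and zu: "A_inner A z u = 0" and e: "e^2 = 1 - (cmod q)^2"
  defines "y \<equiv> scaleC (cnj q) u + scaleC (of_real e) z"
  shows "A_norm A y = 1" "A_inner A u y = q"
proof -
  have uu: "A_inner A u u = 1" using A_inner_self[OF pA, of u] u by simp
  have zz: "A_inner A z z = 1" using A_inner_self[OF pA, of z] z by simp
  have "A_inner A y y = cnj q * q + of_real e * of_real e"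
    unfolding y_def by (simp add: Ai_add_left[OF pA] Ai_add_right Ai_sc_left[OF pA] Ai_sc_right uu zz uz zu)
  also have "\<dots> = of_real ((cmod q)^2 + e^2)"
    using complex_norm_square[of q] by (simp add: power2_eq_square mult.commute)
  also have "\<dots> = 1" using e by simp
  finally have "(A_norm A y)^2 = 1" using A_norm_sq[OF pA, of y] by simp
  thus "A_norm A y = 1" using A_norm_nonneg[OF pA, of y] by (simp add: power2_eq_1_iff)
  show "A_inner A u y = q"
    unfolding y_def by (simp add: Ai_add_right Ai_sc_right uu uz)
qed

lemma key_diag:
  assumes pA: "positive_op A" and r2: "range_dim_ge_2 A" and q1: "cmod q \<le> 1"
    and bdd: "bdd_above (qset A q T)" and u: "A_norm A u = 1"
  shows "cmod q * cmod (A_inner A (T u) u) \<le> A_q_numrad A q T"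
proof -
  obtain z where z: "A_norm A z = 1" and uz: "A_inner A u z = 0" and zu: "A_inner A z u = 0"
    using exists_orth[OF pA r2 u] by blast
  define d where "d = sqrt (1 - (cmod q)^2)"
  have d2: "d^2 = 1 - (cmod q)^2" "(-d)^2 = 1 - (cmod q)^2" proof -
    have "(cmod q)^2 \<le> 1" using q1 by (simp add: power_le_one)
    thus "d^2 = 1 - (cmod q)^2" "(-d)^2 = 1 - (cmod q)^2" by (simp_all add: d_def)
  qed
  define a where "a = A_inner A (T u) u"
  define b where "b = A_inner A (T u) z"
  have mem: "cmod (q * a + of_real e * b) \<le> A_q_numrad A q T" if e: "e^2 = 1 - (cmod q)^2" for e
  proof -
    define y where "y = scaleC (cnj q) u + scaleC (of_real e) z"
    have y1: "A_norm A y = 1" and uy: "A_inner A u y = q" using qvec[OF pA u z uz zu e] by (simp_all add: y_def)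
    have "A_inner A (T u) y = q * a + of_real e * b"
      by (simp add: y_def Ai_add_right Ai_sc_right a_def b_def)
    hence "cmod (q * a + of_real e * b) \<in> qset A q T" unfolding qset_def using y1 uy u by force
    thus ?thesis unfolding numrad_eq using bdd by (rule cSup_upper)
  qed
  have "2 * cmod (q * a) = cmod ((q * a + of_real d * b) + (q * a + of_real (-d) * b))"
  proof -
    have "(q * a + of_real d * b) + (q * a + of_real (-d) * b) = 2 * (q * a)" by simp
    thus ?thesis by (simp add: norm_mult)
  qed
  also have "\<dots> \<le> cmod (q * a + of_real d * b) + cmod (q * a + of_real (-d) * b)" by (rule norm_triangle_ineq)
  also have "\<dots> \<le> 2 * A_q_numrad A q T" using mem[OF d2(1)] mem[OF d2(2)] by simp
  finally show ?thesis by (simp add: a_def norm_mult)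
qed

lemma cinner_zero_right: "cinner x 0 = 0"
  using cinner_scaleC_right[of x 0 0] by (simp add: scaleC_zero_left)

lemma expandP:
  assumes pA: "positive_op A" and bT: "bounded_op T"
  shows "A_inner A (T (u + scaleC c v)) (u + scaleC c v) = A_inner A (T u) u + cnj c * A_inner A (T u) v
          + c * A_inner A (T v) u + c * cnj c * A_inner A (T v) v"
  by (simp add: lin_add[OF bT] lin_sc[OF bT] Ai_add_left[OF pA] Ai_add_right Ai_sc_left[OF pA] Ai_sc_right algebra_simps)

lemma expandN:
  assumes pA: "positive_op A"
  shows "A_inner A (u + scaleC c v) (u + scaleC c v) = A_inner A u u + cnj c * A_inner A u v
          + c * A_inner A v u + c * cnj c * A_inner A v v"
  by (simp add: Ai_add_left[OF pA] Ai_add_right Ai_sc_left[OF pA] Ai_sc_right algebra_simps)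

lemma diag_all:
  assumes pA: "positive_op A" and r2: "range_dim_ge_2 A" and q1: "cmod q \<le> 1"
    and bdd: "bdd_above (qset A q T)" and bT: "bounded_op T"
  shows "cmod q * cmod (A_inner A (T v) v) \<le> A_q_numrad A q T * (A_norm A v)^2"
proof (cases "A_norm A v = 0")
  case True
  hence "A v = 0" by (rule A_null[OF pA])
  hence "A_inner A (T v) v = 0" by (simp add: A_inner_def pos_selfadj[OF pA] cinner_zero_right)
  thus ?thesis using True by simp
next
  case False
  define n where "n = A_norm A v"
  have n0: "n > 0" using False A_norm_nonneg[OF pA, of v] by (simp add: n_def)
  define u where "u = scaleC (of_real (1 / n)) v"
  have u1: "A_norm A u = 1" unfolding u_def n_def by (rule unit_scale[OF pA False])
  have "A_inner A (T u) u = of_real (1/n) * of_real (1/n) * A_inner A (T v) v"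
    by (simp add: u_def lin_sc[OF bT] Ai_sc_left[OF pA] Ai_sc_right)
  hence e: "A_inner A (T v) v = of_real (n^2) * A_inner A (T u) u" using n0
    by (simp add: field_simps power2_eq_square)
  have "cmod q * cmod (A_inner A (T v) v) = n^2 * (cmod q * cmod (A_inner A (T u) u))"
    by (simp add: e norm_mult norm_power)
  also have "\<dots> \<le> n^2 * A_q_numrad A q T"
    by (rule mult_left_mono[OF key_diag[OF pA r2 q1 bdd u1]]) simp
  finally show ?thesis by (simp add: n_def mult.commute)
qed

lemma polar:
  assumes pA: "positive_op A" and r2: "range_dim_ge_2 A" and q1: "cmod q \<le> 1"
    and bdd: "bdd_above (qset A q T)" and bT: "bounded_op T"
  shows "cmod q * cmod (A_inner A (T u) v) \<le> A_q_numrad A q T * ((A_norm A u)^2 + (A_norm A v)^2)"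
proof -
  let ?w = "A_q_numrad A q T"
  define P where "P c = A_inner A (T (u + scaleC c v)) (u + scaleC c v)" for c
  define N where "N c = (A_norm A (u + scaleC c v))^2" for c
  have PN: "cmod q * cmod (P c) \<le> ?w * N c" for c
    unfolding P_def N_def by (rule diag_all[OF pA r2 q1 bdd bT])
  have id: "4 * A_inner A (T u) v = P 1 - P (-1) + \<i> * P \<i> - \<i> * P (- \<i>)"
    unfolding P_def expandP[OF pA bT] by (simp add: algebra_simps)
  have Nre: "N c = Re (A_inner A (u + scaleC c v) (u + scaleC c v))" for c
    unfolding N_def using A_norm_sq[OF pA] by simp
  have Nsum: "N 1 + N (-1) + N \<i> + N (- \<i>) = 4 * ((A_norm A u)^2 + (A_norm A v)^2)"
    unfolding Nre expandN[OF pA] using A_norm_sq[OF pA, of u] A_norm_sq[OF pA, of v] by (simp add: algebra_simps)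
  have "4 * (cmod q * cmod (A_inner A (T u) v)) = cmod q * cmod (P 1 - P (-1) + \<i> * P \<i> - \<i> * P (- \<i>))"
    using arg_cong[OF id, of cmod] by (simp add: norm_mult)
  also have "\<dots> \<le> cmod q * (cmod (P 1) + cmod (P (-1)) + cmod (P \<i>) + cmod (P (-\<i>)))"
  proof (rule mult_left_mono)
    have "cmod (P 1 - P (-1) + \<i> * P \<i> - \<i> * P (- \<i>)) \<le> cmod (P 1 - P (-1) + \<i> * P \<i>) + cmod (\<i> * P (- \<i>))"
      by (rule norm_triangle_ineq4)
    also have "\<dots> \<le> cmod (P 1 - P (-1)) + cmod (\<i> * P \<i>) + cmod (\<i> * P (- \<i>))"
      using norm_triangle_ineq[of "P 1 - P (-1)" "\<i> * P \<i>"] by simp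
    also have "\<dots> \<le> cmod (P 1) + cmod (P (-1)) + cmod (\<i> * P \<i>) + cmod (\<i> * P (- \<i>))"
      using norm_triangle_ineq4[of "P 1" "P (-1)"] by simp
    finally show "cmod (P 1 - P (-1) + \<i> * P \<i> - \<i> * P (- \<i>)) \<le> cmod (P 1) + cmod (P (-1)) + cmod (P \<i>) + cmod (P (-\<i>))"
      by (simp add: norm_mult)
  qed simp
  also have "\<dots> \<le> ?w * (N 1 + N (-1) + N \<i> + N (- \<i>))"
    using PN[of 1] PN[of "-1"] PN[of \<i>] PN[of "-\<i>"] by (simp add: algebra_simps)
  also have "\<dots> = 4 * (?w * ((A_norm A u)^2 + (A_norm A v)^2))" by (simp add: Nsum)
  finally show ?thesis by simp
qed

lemma cinner_zero_left: "cinner 0 y = 0"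
  using cinner_add_left[of 0 0 y] by simp

lemma prod_bound:
  assumes pA: "positive_op A" and r2: "range_dim_ge_2 A" and q1: "cmod q \<le> 1"
    and bdd: "bdd_above (qset A q T)" and hT: "has_A_adjoint A T"
  shows "cmod q * cmod (A_inner A (T u) v) \<le> 2 * A_q_numrad A q T * A_norm A u * A_norm A v"
proof -
  obtain W where bT: "bounded_op T" and adj: "\<And>x y. A_inner A (T x) y = A_inner A x (W y)"
    using hT unfolding has_A_adjoint_def by blast
  let ?w = "A_q_numrad A q T"
  show ?thesis
  proof (cases "A_norm A u = 0 \<or> A_norm A v = 0")
    case True
    hence "A u = 0 \<or> A v = 0" using A_null[OF pA] by blast
    hence "A_inner A (T u) v = 0"
    proof
      assume "A u = 0" thus ?thesis using adj[of u v] by (simp add: A_inner_def cinner_zero_left)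
    next
      assume "A v = 0" thus ?thesis by (simp add: A_inner_def pos_selfadj[OF pA] cinner_zero_right)
    qed
    thus ?thesis using True by auto
  next
    case False
    define nu where "nu = A_norm A u"
    define nv where "nv = A_norm A v"
    have nu: "nu > 0" using False A_norm_nonneg[OF pA, of u] by (simp add: nu_def)
    have nv: "nv > 0" using False A_norm_nonneg[OF pA, of v] by (simp add: nv_def)
    define t where "t = sqrt (nv / nu)"
    have t: "t > 0" using nu nv by (simp add: t_def)
    have t2: "t^2 = nv / nu" using nu nv by (simp add: t_def)
    have "A_inner A (T (scaleC (of_real t) u)) (scaleC (of_real (1/t)) v) = of_real t * of_real (1/t) * A_inner A (T u) v"
      by (simp add: lin_sc[OF bT] Ai_sc_left[OF pA] Ai_sc_right)
    hence eQ: "A_inner A (T (scaleC (of_real t) u)) (scaleC (of_real (1/t)) v) = A_inner A (T u) v"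
      using t by simp
    have "cmod q * cmod (A_inner A (T u) v) \<le> ?w * ((A_norm A (scaleC (of_real t) u))^2 + (A_norm A (scaleC (of_real (1/t)) v))^2)"
      using polar[OF pA r2 q1 bdd bT, of "scaleC (of_real t) u" "scaleC (of_real (1/t)) v"] eQ by simp
    also have "(A_norm A (scaleC (of_real t) u))^2 + (A_norm A (scaleC (of_real (1/t)) v))^2 = t^2 * nu^2 + nv^2 / t^2"
      using t by (simp add: A_norm_sc[OF pA] nu_def nv_def power_mult_distrib power_divide norm_divide)
    also have "\<dots> = 2 * nu * nv" using t2 nu nv t by (simp add: field_simps power2_eq_square)
    finally show ?thesis by (simp add: nu_def nv_def algebra_simps)
  qed
qed

lemma qset_bdd:
  assumes pA: "positive_op A" and hT: "has_A_adjoint A T"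
  shows "bdd_above (qset A q T)"
proof -
  obtain C where C: "\<And>x. A_norm A (T x) \<le> C * A_norm A x" using A_bdd[OF pA hT] by blast
  have "z \<le> C" if zin: "z \<in> qset A q T" for z
  proof -
    obtain x y where z: "z = cmod (A_inner A (T x) y)" and x: "A_norm A x = 1" and y: "A_norm A y = 1"
      using zin unfolding qset_def by blast
    have "z \<le> A_norm A (T x) * A_norm A y" using A_cs[OF pA] z by simp
    also have "\<dots> \<le> C" using C[of x] x y by simp
    finally show ?thesis .
  qed
  thus ?thesis by (rule bdd_aboveI)
qed

lemma qset_ne:
  assumes pA: "positive_op A" and r2: "range_dim_ge_2 A" and q1: "cmod q \<le> 1"
  shows "qset A q T \<noteq> {}"
proof -
  obtain u where u: "A_norm A u = 1" using exists_unit[OF pA r2] by blast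
  obtain z where z: "A_norm A z = 1" and uz: "A_inner A u z = 0" and zu: "A_inner A z u = 0"
    using exists_orth[OF pA r2 u] by blast
  define d where "d = sqrt (1 - (cmod q)^2)"
  have "(cmod q)^2 \<le> 1" using q1 by (simp add: power_le_one)
  hence d2: "d^2 = 1 - (cmod q)^2" by (simp add: d_def)
  define y where "y = scaleC (cnj q) u + scaleC (of_real d) z"
  have "A_norm A y = 1" "A_inner A u y = q" using qvec[OF pA u z uz zu d2] by (simp_all add: y_def)
  thus ?thesis unfolding qset_def using u by blast
qed

lemma numrad_nonneg:
  assumes pA: "positive_op A" and r2: "range_dim_ge_2 A" and q1: "cmod q \<le> 1" and hT: "has_A_adjoint A T"
  shows "0 \<le> A_q_numrad A q T"
proof -
  obtain u where u: "A_norm A u = 1" using exists_unit[OF pA r2] by blast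
  have "0 \<le> cmod q * cmod (A_inner A (T u) u)" by simp
  also have "\<dots> \<le> A_q_numrad A q T" by (rule key_diag[OF pA r2 q1 qset_bdd[OF pA hT] u])
  finally show ?thesis .
qed

theorem mainTheorem4:
  fixes A T S :: "'a::chilbert_space \<Rightarrow> 'a" and q :: complex
  assumes "positive_op A"
    and "range_dim_ge_2 A"
    and "has_A_adjoint A T"
    and "has_A_adjoint A S"
    and "0 < cmod q" and "cmod q \<le> 1"
  shows "(cmod q)^2 * A_q_numrad A q (T \<circ> S) \<le> 4 * A_q_numrad A q T * A_q_numrad A q S"
proof -
  note pA = assms(1) and r2 = assms(2) and hT = assms(3) and hS = assms(4) and q0 = assms(5) and q1 = assms(6)
  let ?wT = "A_q_numrad A q T" and ?wS = "A_q_numrad A q S"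
  have wT0: "0 \<le> ?wT" by (rule numrad_nonneg[OF pA r2 q1 hT])
  have wS0: "0 \<le> ?wS" by (rule numrad_nonneg[OF pA r2 q1 hS])
  have bd: "(cmod q)^2 * e \<le> 4 * ?wT * ?wS" if ein: "e \<in> qset A q (T \<circ> S)" for e
  proof -
    obtain x y where e: "e = cmod (A_inner A (T (S x)) y)" and x: "A_norm A x = 1" and y: "A_norm A y = 1"
      using ein unfolding qset_def by auto
    have Sx: "cmod q * A_norm A (S x) \<le> 2 * ?wS"
    proof (cases "A_norm A (S x) = 0")
      case True thus ?thesis using wS0 by simp
    next
      case False
      hence pos: "A_norm A (S x) > 0" using A_norm_nonneg[OF pA, of "S x"] by simp
      have "cmod q * (A_norm A (S x))^2 = cmod q * cmod (A_inner A (S x) (S x))"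
        using A_inner_self[OF pA, of "S x"] by (simp add: norm_power)
      also have "\<dots> \<le> 2 * ?wS * A_norm A x * A_norm A (S x)"
        by (rule prod_bound[OF pA r2 q1 qset_bdd[OF pA hS] hS])
      finally have "(cmod q * A_norm A (S x)) * A_norm A (S x) \<le> (2 * ?wS) * A_norm A (S x)"
        using x by (simp add: power2_eq_square algebra_simps)
      thus ?thesis using pos by simp
    qed
    have "cmod q * e \<le> 2 * ?wT * A_norm A (S x) * A_norm A y"
      unfolding e by (rule prod_bound[OF pA r2 q1 qset_bdd[OF pA hT] hT])
    hence "cmod q * (cmod q * e) \<le> cmod q * (2 * ?wT * A_norm A (S x))" using y q0 by simp
    also have "\<dots> = 2 * ?wT * (cmod q * A_norm A (S x))" by (simp add: algebra_simps)
    also have "\<dots> \<le> 2 * ?wT * (2 * ?wS)" by (rule mult_left_mono[OF Sx]) (use wT0 in simp)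
    finally show ?thesis by (simp add: power2_eq_square algebra_simps)
  qed
  have "Sup (qset A q (T \<circ> S)) \<le> 4 * ?wT * ?wS / (cmod q)^2"
  proof (rule cSup_least[OF qset_ne[OF pA r2 q1]])
    fix e assume "e \<in> qset A q (T \<circ> S)"
    thus "e \<le> 4 * ?wT * ?wS / (cmod q)^2" using bd q0 by (simp add: field_simps)
  qed
  hence "(cmod q)^2 * Sup (qset A q (T \<circ> S)) \<le> 4 * ?wT * ?wS" using q0 by (simp add: field_simps)
  thus ?thesis by (simp add: numrad_eq)
qed

end
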